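(* Let $V$ be a finite set, $E\subset V\times V$ a set of directed edges without self-loops such that every vertex has at most one outgoing edge, and let real weights $\omega_v$ ($v\in V$), $\omega_{vw}$ ($v\ne w\in V$) and $B$ satisfy: (i) $\omega_v>\omega_{vw}$ for $(v,w)\in E$; (ii) $\omega_{uv}>\omega_{vw}$ whenever $(u,v),(v,w)\in E$; (iii) $\omega_{vw}=B$ whenever $v\neq w$, $(v,w)\notin E$ and $(w,v)\notin E$; (iv) $\omega_{vw}=\omega_{wv}$ for all $v\ne w$; (v) $B>\max\{\max_{v}\omega_v,\max_{(v,w)\in E}\omega_{vw}\}$. Let $S=\operatorname{conv}\{e_v:v\in V\}\subset\mathbb{R}^V$ (standard basis vectors) and let $\ell:S\to\mathbb{R}$ satisfy $\ell(e_v)=\omega_v$ for $v\in V$, $\ell(\tfrac12(e_v+e_w))=\omega_{vw}$ for $v\ne w$, and $\ell$ affine on each corner $S_v^{1/2}$, $v\in V$. Consider the conditional gradient iteration $$d_k=\operatorname{argmin}_{y\in S}\{\partial_{y-x_k}\ell(x_k)\}-x_k,\qquad x_{k+1}=x_k+\alpha_kd_k,$$ with either constant step $\alpha_k=1$, or exact line search $\alpha_k\in\operatorname{argmin}\{\ell(x_k+\alpha d_k):\alpha\ge0,\ x_k+\alpha d_k\in S\}$. Let $v_0,\dots,v_K\in V$ with $(v_k,v_{k+1})\in E$ for $k<K$ and $v_K$ without outgoing edge, and let $x_0=e_{v_0}$. (a) If $\alpha_k=1$ for all $k$, then the minimizers defining $d_k$ are unique for $k<K$ and $x_k=e_{v_k}$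 for $k=0,\dots,K$. (b) If in addition $\omega_v>\omega_{vw}>\omega_w$ for all $(v,w)\in E$, then for either choice of step size (constant $1$ or exact line search) we have $x_k=e_{v_k}$ for $k\le K$, $x_k=e_{v_K}$ for all $k>K$, and $\ell(x_k)=\omega_{v_k}$ with $\omega_{v_0}>\omega_{v_1}>\cdots>\omega_{v_K}$.
   Context: For $v\ne w$ and $0<\mu\le 1$, $e^\mu_{vw}=(1-\mu)e_v+\mu e_w$, and the corner $S_v^\mu=\operatorname{conv}(\{e_v\}\cup\{e^\mu_{vw}:w\ne v\})$. $\partial_{y-x}\ell(x)=\lim_{h\to0,h\ge 0}\frac1h[\ell(x+h(y-x))-\ell(x)]$ is the one-sided directional derivative. (The graph models the execution of a deterministic Turing machine: vertices are machine configurations, edges are computation steps, vertices without outgoing edge are halting configurations.) *)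

theory Defs
  imports "HOL-Analysis.Analysis"
begin

definition ebas :: "'v::finite \<Rightarrow> real^'v" where
  "ebas v = axis v 1"

definition simplexV :: "(real^'v::finite) set" where
  "simplexV = convex hull (range ebas)"

definition emu :: "real \<Rightarrow> 'v::finite \<Rightarrow> 'v \<Rightarrow> real^'v" where
  "emu \<mu> v w = (1 - \<mu>) *\<^sub>R ebas v + \<mu> *\<^sub>R ebas w"

definition corner :: "'v::finite \<Rightarrow> real \<Rightarrow> (real^'v) set" where
  "corner v \<mu> = convex hull (insert (ebas v) {emu \<mu> v w | w. w \<noteq> v})"

definition affine_on :: "('a::real_vector) set \<Rightarrow> ('a \<Rightarrow> real) \<Rightarrow> bool" where
  "affine_on C f \<longleftrightarrow> (\<forall>x\<in>C. \<forall>y\<in>C. \<forall>t::real. 0 \<le> t \<and> t \<le> 1 \<longrightarrow>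
      f ((1 - t) *\<^sub>R x + t *\<^sub>R y) = (1 - t) * f x + t * f y)"

definition dirderiv :: "('a::real_vector \<Rightarrow> real) \<Rightarrow> 'a \<Rightarrow> 'a \<Rightarrow> real" where
  "dirderiv f x d = Lim (at_right 0) (\<lambda>h::real. (f (x + h *\<^sub>R d) - f x) / h)"

definition cg_minimizers :: "(real^'v::finite \<Rightarrow> real) \<Rightarrow> real^'v \<Rightarrow> (real^'v) set" where
  "cg_minimizers l x = {y \<in> simplexV. \<forall>z\<in>simplexV. dirderiv l x (y - x) \<le> dirderiv l x (z - x)}"

definition line_search :: "(real^'v::finite \<Rightarrow> real) \<Rightarrow> real^'v \<Rightarrow> real^'v \<Rightarrow> real set" where
  "line_search l x d = {a. a \<ge> 0 \<and> x + a *\<^sub>R d \<in> simplexV \<and>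
      (\<forall>b. b \<ge> 0 \<and> x + b *\<^sub>R d \<in> simplexV \<longrightarrow> l (x + a *\<^sub>R d) \<le> l (x + b *\<^sub>R d))}"

end

theory Submission
  imports Defs
begin


lemma ebas_nth: "ebas v $ i = (if i = v then 1 else 0)"
  by (simp add: ebas_def axis_def)

lemma ebas_in_simplex: "ebas w \<in> simplexV"
  unfolding simplexV_def by (rule hull_inc) simp

lemma simplex_sub: "simplexV \<subseteq> {x::real^'v::finite. (\<forall>i. 0 \<le> x$i) \<and> sum (\<lambda>i. x$i) UNIV = 1}"
  unfolding simplexV_def
proof (rule hull_minimal)
  show "range ebas \<subseteq> {x::real^'v::finite. (\<forall>i. 0 \<le> x$i) \<and> sum (\<lambda>i. x$i) UNIV = 1}"
    by (auto simp: ebas_nth)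
  show "convex {x::real^'v::finite. (\<forall>i. 0 \<le> x$i) \<and> sum (\<lambda>i. x$i) UNIV = 1}"
    unfolding convex_def by (auto simp: sum.distrib sum_distrib_left[symmetric])
qed

lemma simplexD: assumes "y \<in> simplexV" shows "\<And>i. 0 \<le> y$i" "sum (\<lambda>i. y$i) UNIV = 1"
  using simplex_sub assms by auto

lemma affine_on_uv:
  assumes "affine_on C f" "x \<in> C" "y \<in> C" "0 \<le> u" "0 \<le> v" "u + v = 1"
  shows "f (u *\<^sub>R x + v *\<^sub>R y) = u * f x + v * f y"
proof -
  have u: "u = 1 - v" using assms(6) by simp
  have "v \<le> 1" using assms(4,6) by simp
  then show ?thesis using assms(1,2,3,5) unfolding u affine_on_def by blast
qed

lemma affine_convex_on:
  assumes "affine_on C f" "convex C"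
  shows "convex_on C f" "convex_on C (\<lambda>x. - f x)"
  using assms(2) affine_on_uv[OF assms(1)] unfolding convex_on_def by auto

lemma affine_on_sum:
  fixes a :: "'a \<Rightarrow> real"
  assumes "finite S" "affine_on C f" "convex C"
    and "(\<Sum> i \<in> S. a i) = 1"
    and "\<And>i. i \<in> S \<Longrightarrow> a i \<ge> 0"
    and "\<And>i. i \<in> S \<Longrightarrow> y i \<in> C"
  shows "f (\<Sum> i \<in> S. a i *\<^sub>R y i) = (\<Sum> i \<in> S. a i * f (y i))"
proof -
  have ne: "S \<noteq> {}" using assms(4) by auto
  have "f (\<Sum> i \<in> S. a i *\<^sub>R y i) \<le> (\<Sum> i \<in> S. a i * f (y i))"
    by (rule convex_on_sum[OF assms(1) ne affine_convex_on(1)[OF assms(2,3)]]) (use assms in auto)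
  moreover have "- f (\<Sum> i \<in> S. a i *\<^sub>R y i) \<le> (\<Sum> i \<in> S. a i * - f (y i))"
    by (rule convex_on_sum[OF assms(1) ne affine_convex_on(2)[OF assms(2,3)]]) (use assms in auto)
  ultimately show ?thesis by (simp add: sum_negf)
qed



lemma corner_v: "ebas v \<in> corner v \<mu>"
  unfolding corner_def by (rule hull_inc) simp

lemma corner_m: "w \<noteq> v \<Longrightarrow> (1/2) *\<^sub>R (ebas v + ebas w) \<in> corner v (1/2)"
  unfolding corner_def
  by (rule hull_inc) (auto simp: emu_def scaleR_add_right)

lemma convex_corner: "convex (corner v \<mu>)"
  unfolding corner_def by (rule convex_convex_hull)

lemma L1:
  fixes l :: "real^'v::finite \<Rightarrow> real"
  assumes lv: "l (ebas v) = c0"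
    and lm: "\<And>w. w \<noteq> v \<Longrightarrow> l ((1/2) *\<^sub>R (ebas v + ebas w)) = m w"
    and la: "affine_on (corner v (1/2)) l"
    and y: "y \<in> simplexV" and h: "0 < h" "h \<le> 1/2"
  shows "l (ebas v + h *\<^sub>R (y - ebas v)) = c0 + h * (\<Sum>w\<in>UNIV. y$w * (if w = v then 0 else 2*(m w - c0)))"
proof -
  define R where "R = UNIV - {v}"
  define S where "S = (\<Sum>w\<in>R. y$w)"
  have fin: "finite R" by simp
  have yn: "\<And>i. 0 \<le> y$i" and ys: "sum (\<lambda>i. y$i) UNIV = 1" using simplexD[OF y] by auto
  have S1: "S = 1 - y$v" using ys sum.remove[of UNIV v "\<lambda>i. y$i"] by (simp add: S_def R_def)
  define a where "a w = (if w = v then 1 - 2*h*S else 2*h*y$w)" for w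
  define q where "q w = (if w = v then ebas v else (1/2) *\<^sub>R (ebas v + ebas w))" for w
  have sumR: "\<And>g. sum g UNIV = g v + sum g R" unfolding R_def by (rule sum.remove) auto
  have aR: "sum a R = 2*h*S" unfolding S_def a_def R_def sum_distrib_left by (rule sum.cong) auto
  have asum: "sum a UNIV = 1" using sumR[of a] aR by (simp add: a_def)
  have anonneg: "\<And>w. 0 \<le> a w"
  proof -
    fix w
    have "S \<le> 1" using S1 yn[of v] by simp
    then have "h*S \<le> h" using h(1) by (simp add: mult_left_le)
    then have "2*h*S \<le> 1" using h by linarith
    then show "0 \<le> a w" using h yn by (simp add: a_def)
  qed
  have qC: "\<And>w. q w \<in> corner v (1/2)" by (simp add: q_def corner_v corner_m)
  have veq: "(\<Sum>w\<in>UNIV. a w *\<^sub>R q w) = ebas v + h *\<^sub>R (y - ebas v)"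
  proof (subst vec_eq_iff, intro allI)
    fix i
    have "(\<Sum>w\<in>UNIV. a w *\<^sub>R q w) $ i = (\<Sum>w\<in>UNIV. a w * q w $ i)" by simp
    also have "\<dots> = a v * q v $ i + (\<Sum>w\<in>R. a w * q w $ i)" by (rule sumR)
    also have "\<dots> = (ebas v + h *\<^sub>R (y - ebas v)) $ i"
    proof (cases "i = v")
      case True
      have "(\<Sum>w\<in>R. a w * q w $ i) = (\<Sum>w\<in>R. h * y$w)"
        by (rule sum.cong) (auto simp: R_def a_def q_def ebas_nth True)
      also have "\<dots> = h * S" by (simp add: S_def sum_distrib_left)
      finally have e1: "(\<Sum>w\<in>R. a w * q w $ i) = h * S" .
      have e2: "a v * q v $ i = 1 - 2*h*S" by (simp add: a_def q_def ebas_nth True)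
      have e3: "(ebas v + h *\<^sub>R (y - ebas v)) $ i = 1 + h * (y$v - 1)" by (simp add: ebas_nth True algebra_simps)
      show ?thesis unfolding e1 e2 e3 S1 by (simp add: algebra_simps)
    next
      case False
      have "(\<Sum>w\<in>R. a w * q w $ i) = (\<Sum>w\<in>R. if w = i then h * y$i else 0)"
        by (rule sum.cong) (auto simp: R_def a_def q_def ebas_nth False)
      also have "\<dots> = h * y$i" using False by (simp add: R_def)
      finally have e1: "(\<Sum>w\<in>R. a w * q w $ i) = h * y$i" .
      have e2: "a v * q v $ i = 0" by (simp add: a_def q_def ebas_nth False)
      have e3: "(ebas v + h *\<^sub>R (y - ebas v)) $ i = h * y$i" by (simp add: ebas_nth False algebra_simps)
      show ?thesis unfolding e1 e2 e3 by simp
    qed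
    finally show "(\<Sum>w\<in>UNIV. a w *\<^sub>R q w) $ i = (ebas v + h *\<^sub>R (y - ebas v)) $ i" .
  qed
  have "l (ebas v + h *\<^sub>R (y - ebas v)) = (\<Sum>w\<in>UNIV. a w * l (q w))"
    unfolding veq[symmetric]
    by (rule affine_on_sum[OF _ la convex_corner asum anonneg qC]) auto
  also have "\<dots> = a v * c0 + (\<Sum>w\<in>R. a w * l (q w))" by (subst sumR) (simp add: q_def lv)
  also have "a v * c0 + (\<Sum>w\<in>R. a w * l (q w)) = a v * c0 + (\<Sum>w\<in>R. 2*h*(y$w * m w))"
    by (intro arg_cong[where f="\<lambda>t. a v * c0 + t"] sum.cong) (auto simp: R_def a_def q_def lm)
  also have "\<dots> = a v * c0 + 2*h*(\<Sum>w\<in>R. y$w * m w)" by (simp add: sum_distrib_left)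
  finally have L: "l (ebas v + h *\<^sub>R (y - ebas v)) = a v * c0 + 2*h*(\<Sum>w\<in>R. y$w * m w)" .
  have "(\<Sum>w\<in>UNIV. y$w * (if w = v then 0 else 2*(m w - c0)))
      = (\<Sum>w\<in>R. y$w * (if w = v then 0 else 2*(m w - c0)))"
    by (subst sumR) simp
  also have "\<dots> = (\<Sum>w\<in>R. 2*(y$w * m w) - 2*c0*y$w)"
    by (rule sum.cong) (auto simp: R_def algebra_simps)
  also have "\<dots> = 2*(\<Sum>w\<in>R. y$w * m w) - 2*c0*S"
    by (simp add: sum_subtractf sum_distrib_left[symmetric] S_def)
  finally have M: "(\<Sum>w\<in>UNIV. y$w * (if w = v then 0 else 2*(m w - c0))) = 2*(\<Sum>w\<in>R. y$w * m w) - 2*c0*S" .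
  show ?thesis unfolding L M by (simp add: a_def algebra_simps)
qed



lemma L2:
  fixes l :: "real^'v::finite \<Rightarrow> real"
  assumes lv: "l (ebas v) = c0"
    and lm: "\<And>w. w \<noteq> v \<Longrightarrow> l ((1/2) *\<^sub>R (ebas v + ebas w)) = m w"
    and la: "affine_on (corner v (1/2)) l"
    and y: "y \<in> simplexV"
  shows "dirderiv l (ebas v) (y - ebas v) = (\<Sum>w\<in>UNIV. y$w * (if w = v then 0 else 2*(m w - c0)))"
proof -
  let ?D = "(\<Sum>w\<in>UNIV. y$w * (if w = v then 0 else 2*(m w - c0)))"
  have ev: "eventually (\<lambda>h::real. h \<in> {0<..<1/2}) (at_right 0)"
    by (rule eventually_at_right_real) simp
  have "eventually (\<lambda>h. (l (ebas v + h *\<^sub>R (y - ebas v)) - l (ebas v)) / h = ?D) (at_right 0)"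
  proof (rule eventually_mono[OF ev])
    fix h :: real assume h: "h \<in> {0<..<1/2}"
    then have "l (ebas v + h *\<^sub>R (y - ebas v)) = c0 + h * ?D"
      by (intro L1[OF lv lm la y]) auto
    then show "(l (ebas v + h *\<^sub>R (y - ebas v)) - l (ebas v)) / h = ?D"
      using h lv by simp
  qed
  then have "((\<lambda>h. (l (ebas v + h *\<^sub>R (y - ebas v)) - l (ebas v)) / h) \<longlongrightarrow> ?D) (at_right 0)"
    by (rule tendsto_eventually)
  then show ?thesis unfolding dirderiv_def
    by (intro tendsto_Lim) simp_all
qed

lemma L3:
  fixes l :: "real^'v::finite \<Rightarrow> real" and c :: "'v \<Rightarrow> real"
  assumes D: "\<And>y. y \<in> simplexV \<Longrightarrow> dirderiv l x (y - x) = (\<Sum>w\<in>UNIV. y$w * c w)"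
    and lt: "\<And>w. w \<noteq> w0 \<Longrightarrow> c w0 < c w"
  shows "cg_minimizers l x = {ebas w0}"
proof -
  have "(\<Sum>w\<in>UNIV. ebas w0 $ w * c w) = (\<Sum>w\<in>UNIV. if w = w0 then c w else 0)"
    by (rule sum.cong) (auto simp: ebas_nth)
  then have De: "dirderiv l x (ebas w0 - x) = c w0"
    using D[OF ebas_in_simplex[of w0]] by simp
  have key: "(\<Sum>w\<in>UNIV. z$w * c w) - c w0 = (\<Sum>w\<in>UNIV. z$w * (c w - c w0))" if z: "z \<in> simplexV" for z
  proof -
    have "(\<Sum>w\<in>UNIV. z$w * (c w - c w0)) = (\<Sum>w\<in>UNIV. z$w * c w) - (\<Sum>w\<in>UNIV. z$w * c w0)"
      by (simp add: right_diff_distrib sum_subtractf)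
    also have "(\<Sum>w\<in>UNIV. z$w * c w0) = (\<Sum>w\<in>UNIV. z$w) * c w0" by (rule sum_distrib_right[symmetric])
    finally have "(\<Sum>w\<in>UNIV. z$w * (c w - c w0)) = (\<Sum>w\<in>UNIV. z$w * c w) - (\<Sum>w\<in>UNIV. z$w) * c w0" .
    then show ?thesis using simplexD(2)[OF z] by simp
  qed
  have nn: "0 \<le> z$w * (c w - c w0)" if z: "z \<in> simplexV" for z w
    using simplexD(1)[OF z, of w] lt[of w] by (cases "w = w0") auto
  show ?thesis
  proof (intro set_eqI iffI)
    fix y assume "y \<in> cg_minimizers l x"
    then have y: "y \<in> simplexV" and le: "dirderiv l x (y - x) \<le> dirderiv l x (ebas w0 - x)"
      unfolding cg_minimizers_def using ebas_in_simplex by auto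
    have "(\<Sum>w\<in>UNIV. y$w * (c w - c w0)) \<le> 0" using le D[OF y] De key[OF y] by simp
    moreover have "0 \<le> (\<Sum>w\<in>UNIV. y$w * (c w - c w0))" by (rule sum_nonneg) (rule nn[OF y])
    ultimately have "(\<Sum>w\<in>UNIV. y$w * (c w - c w0)) = 0" by linarith
    then have z: "\<And>w. y$w * (c w - c w0) = 0"
      using sum_nonneg_eq_0_iff[of UNIV "\<lambda>w. y$w * (c w - c w0)"] nn[OF y] by auto
    have y0: "y$w = 0" if "w \<noteq> w0" for w
    proof -
      have "c w - c w0 \<noteq> 0" using lt[OF that] by simp
      then show ?thesis using z[of w] by simp
    qed
    have "sum (\<lambda>i. y$i) UNIV = y$w0 + sum (\<lambda>i. y$i) (UNIV - {w0})" by (rule sum.remove) auto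
    also have "sum (\<lambda>i. y$i) (UNIV - {w0}) = 0" using y0 by (intro sum.neutral) auto
    finally have "y$w0 = 1" using simplexD(2)[OF y] by simp
    then have "y = ebas w0" using y0 by (auto simp: vec_eq_iff ebas_nth)
    then show "y \<in> {ebas w0}" by simp
  next
    fix y assume "y \<in> {ebas w0}"
    then have y: "y = ebas w0" by simp
    have "dirderiv l x (y - x) \<le> dirderiv l x (z - x)" if z: "z \<in> simplexV" for z
    proof -
      have "0 \<le> (\<Sum>w\<in>UNIV. z$w * (c w - c w0))" by (rule sum_nonneg) (rule nn[OF z])
      then show ?thesis using y De D[OF z] key[OF z] by simp
    qed
    then show "y \<in> cg_minimizers l x" unfolding cg_minimizers_def using y ebas_in_simplex by auto
  qed
qed

lemma L4:
  fixes l :: "real^'v::finite \<Rightarrow> real"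
  assumes vw: "v \<noteq> w0"
    and lv: "l (ebas v) = c0" and lw: "l (ebas w0) = c1"
    and m1: "l ((1/2) *\<^sub>R (ebas v + ebas w0)) = m"
    and m2: "l ((1/2) *\<^sub>R (ebas w0 + ebas v)) = m"
    and av: "affine_on (corner v (1/2)) l" and aw: "affine_on (corner w0 (1/2)) l"
    and ineq: "c0 > m" "m > c1"
    and a: "a \<in> line_search l (ebas v) (ebas w0 - ebas v)"
  shows "a = 1"
proof -
  let ?p = "ebas v + a *\<^sub>R (ebas w0 - ebas v)"
  have a0: "0 \<le> a" and ps: "?p \<in> simplexV"
    and all: "\<forall>b. 0 \<le> b \<and> ebas v + b *\<^sub>R (ebas w0 - ebas v) \<in> simplexV \<longrightarrow> l ?p \<le> l (ebas v + b *\<^sub>R (ebas w0 - ebas v))"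
    using a unfolding line_search_def by auto
  have "l ?p \<le> l (ebas v + 1 *\<^sub>R (ebas w0 - ebas v))"
    using all[rule_format, of 1] ebas_in_simplex[of w0] by simp
  then have le: "l ?p \<le> c1" using lw by simp
  have "0 \<le> ?p $ v" using simplexD(1)[OF ps] by blast
  then have a1: "a \<le> 1" using vw by (simp add: ebas_nth)
  show "a = 1"
  proof (rule ccontr)
    assume "a \<noteq> 1"
    then have a1': "a < 1" using a1 by simp
    have "l ?p > c1"
    proof (cases "a \<le> 1/2")
      case True
      have eq: "?p = (1 - 2*a) *\<^sub>R ebas v + (2*a) *\<^sub>R ((1/2) *\<^sub>R (ebas v + ebas w0))"
        by (auto simp: vec_eq_iff ebas_nth algebra_simps)
      have "l ?p = (1 - 2*a) * c0 + (2*a) * m"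
        unfolding eq using av[unfolded affine_on_def, rule_format, OF corner_v[of v "1/2"] corner_m[of w0 v], of "2*a"] vw True a0
        by (simp add: lv m1)
      moreover have "0 \<le> (1 - 2*a) * (c0 - m)" using True ineq by simp
      ultimately show ?thesis using ineq by (simp add: algebra_simps)
    next
      case False
      have eq: "?p = (1 - (2 - 2*a)) *\<^sub>R ebas w0 + (2 - 2*a) *\<^sub>R ((1/2) *\<^sub>R (ebas w0 + ebas v))"
        by (auto simp: vec_eq_iff ebas_nth algebra_simps)
      have "l ?p = (1 - (2 - 2*a)) * c1 + (2 - 2*a) * m"
        unfolding eq using aw[unfolded affine_on_def, rule_format, OF corner_v[of w0 "1/2"] corner_m[of v w0], of "2 - 2*a"] vw False a1
        by (simp add: lw m2)
      moreover have "0 < (2 - 2*a) * (m - c1)" using a1' ineq by simp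
      ultimately show ?thesis by (simp add: algebra_simps)
    qed
    then show False using le by simp
  qed
qed


theorem mainTheorem2:
  fixes E :: "('v::finite \<times> 'v) set"
    and \<omega>1 :: "'v \<Rightarrow> real" and \<omega>2 :: "'v \<Rightarrow> 'v \<Rightarrow> real" and B :: real
    and l :: "real^'v \<Rightarrow> real"
    and vs :: "nat \<Rightarrow> 'v" and K :: nat
  assumes noloop: "\<And>v. (v, v) \<notin> E"
    and outdeg: "\<And>v w w'. (v, w) \<in> E \<Longrightarrow> (v, w') \<in> E \<Longrightarrow> w = w'"
    and w_i: "\<And>v w. (v, w) \<in> E \<Longrightarrow> \<omega>1 v > \<omega>2 v w"
    and w_ii: "\<And>u v w. (u, v) \<in> E \<Longrightarrow> (v, w) \<in> E \<Longrightarrow> \<omega>2 u v > \<omega>2 v w"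
    and w_iii: "\<And>v w. v \<noteq> w \<Longrightarrow> (v, w) \<notin> E \<Longrightarrow> (w, v) \<notin> E \<Longrightarrow> \<omega>2 v w = B"
    and w_iv: "\<And>v w. v \<noteq> w \<Longrightarrow> \<omega>2 v w = \<omega>2 w v"
    and w_v1: "\<And>v. \<omega>1 v < B"
    and w_v2: "\<And>v w. (v, w) \<in> E \<Longrightarrow> \<omega>2 v w < B"
    and l_vert: "\<And>v. l (ebas v) = \<omega>1 v"
    and l_mid: "\<And>v w. v \<noteq> w \<Longrightarrow> l ((1/2) *\<^sub>R (ebas v + ebas w)) = \<omega>2 v w"
    and l_aff: "\<And>v. affine_on (corner v (1/2)) l"
    and path: "\<And>k. k < K \<Longrightarrow> (vs k, vs (Suc k)) \<in> E"
    and path_end: "\<And>w. (vs K, w) \<notin> E"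
  shows "(\<forall>(x :: nat \<Rightarrow> real^'v) (y :: nat \<Rightarrow> real^'v).
            x 0 = ebas (vs 0)
            \<and> (\<forall>k. y k \<in> cg_minimizers l (x k))
            \<and> (\<forall>k. x (Suc k) = x k + (1::real) *\<^sub>R (y k - x k))
          \<longrightarrow> (\<forall>k<K. cg_minimizers l (x k) = {y k})
            \<and> (\<forall>k\<le>K. x k = ebas (vs k)))
       \<and> ((\<forall>v w. (v, w) \<in> E \<longrightarrow> \<omega>1 v > \<omega>2 v w \<and> \<omega>2 v w > \<omega>1 w) \<longrightarrow>
          (\<forall>(x :: nat \<Rightarrow> real^'v) (y :: nat \<Rightarrow> real^'v) (\<alpha> :: nat \<Rightarrow> real).
            x 0 = ebas (vs 0)
            \<and> (\<forall>k. y k \<in> cg_minimizers l (x k))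
            \<and> (\<forall>k. x (Suc k) = x k + \<alpha> k *\<^sub>R (y k - x k))
            \<and> ((\<forall>k. \<alpha> k = 1) \<or> (\<forall>k. \<alpha> k \<in> line_search l (x k) (y k - x k)))
          \<longrightarrow> (\<forall>k\<le>K. x k = ebas (vs k))
            \<and> (\<forall>k>K. x k = ebas (vs K))
            \<and> (\<forall>k\<le>K. l (x k) = \<omega>1 (vs k))
            \<and> (\<forall>k<K. \<omega>1 (vs k) > \<omega>1 (vs (Suc k)))))"
proof -
  define cc where "cc v w = (if w = v then 0 else 2*(\<omega>2 v w - \<omega>1 v))" for v w
  have DD: "\<And>v y. y \<in> simplexV \<Longrightarrow> dirderiv l (ebas v) (y - ebas v) = (\<Sum>w\<in>UNIV. y$w * cc v w)"
    unfolding cc_def by (rule L2[OF l_vert _ l_aff]) (auto intro: l_mid)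
  have succ: "cg_minimizers l (ebas (vs k)) = {ebas (vs (Suc k))}" if k: "k < K" for k
  proof (rule L3[OF DD])
    fix w assume w: "w \<noteq> vs (Suc k)"
    let ?v = "vs k" and ?w0 = "vs (Suc k)"
    have e: "(?v, ?w0) \<in> E" using path[OF k] .
    have vw: "?v \<noteq> ?w0" using noloop[of ?v] e by auto
    have c0: "cc ?v ?w0 < 0" using w_i[OF e] vw by (simp add: cc_def)
    show "cc ?v ?w0 < cc ?v w"
    proof (cases "w = ?v")
      case True then show ?thesis using c0 by (simp add: cc_def)
    next
      case False
      have "\<omega>2 ?v w > \<omega>2 ?v ?w0"
      proof (cases "(?v, w) \<in> E")
        case True then show ?thesis using outdeg[OF True e] w by simp
      next
        case nE: False
        show ?thesis
        proof (cases "(w, ?v) \<in> E")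
          case True
          then show ?thesis using w_ii[OF True e] w_iv[of ?v w] False by simp
        next
          case False
          then show ?thesis using w_iii[OF \<open>w \<noteq> ?v\<close>[symmetric] nE False] w_v2[OF e] by simp
        qed
      qed
      then show ?thesis using False vw by (simp add: cc_def)
    qed
  qed
  have part_a: "\<forall>(x :: nat \<Rightarrow> real^'v) (y :: nat \<Rightarrow> real^'v).
            x 0 = ebas (vs 0)
            \<and> (\<forall>k. y k \<in> cg_minimizers l (x k))
            \<and> (\<forall>k. x (Suc k) = x k + (1::real) *\<^sub>R (y k - x k))
          \<longrightarrow> (\<forall>k<K. cg_minimizers l (x k) = {y k})
            \<and> (\<forall>k\<le>K. x k = ebas (vs k))"
  proof (intro allI impI)
    fix x y :: "nat \<Rightarrow> real^'v"
    assume H: "x 0 = ebas (vs 0) \<and> (\<forall>k. y k \<in> cg_minimizers l (x k)) \<and> (\<forall>k. x (Suc k) = x k + (1::real) *\<^sub>R (y k - x k))"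
    have X: "k \<le> K \<longrightarrow> x k = ebas (vs k)" for k
    proof (induction k)
      case 0 then show ?case using H by simp
    next
      case (Suc k)
      show ?case
      proof
        assume "Suc k \<le> K"
        then have k: "k < K" by simp
        then have "x k = ebas (vs k)" using Suc by simp
        moreover have "y k \<in> cg_minimizers l (x k)" using H by blast
        ultimately have "y k \<in> {ebas (vs (Suc k))}" using succ[OF k] by simp
        then show "x (Suc k) = ebas (vs (Suc k))" using H by simp
      qed
    qed
    have "cg_minimizers l (x k) = {y k}" if k: "k < K" for k
    proof -
      have "x k = ebas (vs k)" using X k by simp
      then have "cg_minimizers l (x k) = {ebas (vs (Suc k))}" using succ[OF k] by simp
      moreover have "y k \<in> cg_minimizers l (x k)" using H by blast
      ultimately have "y k = ebas (vs (Suc k))" by simp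
      moreover have "cg_minimizers l (x k) = {ebas (vs (Suc k))}" using succ[OF k] \<open>x k = ebas (vs k)\<close> by simp
      ultimately show ?thesis by simp
    qed
    then show "(\<forall>k<K. cg_minimizers l (x k) = {y k}) \<and> (\<forall>k\<le>K. x k = ebas (vs k))" using X by simp
  qed
  have part_b: "(\<forall>v w. (v, w) \<in> E \<longrightarrow> \<omega>1 v > \<omega>2 v w \<and> \<omega>2 v w > \<omega>1 w) \<longrightarrow>
          (\<forall>(x :: nat \<Rightarrow> real^'v) (y :: nat \<Rightarrow> real^'v) (\<alpha> :: nat \<Rightarrow> real).
            x 0 = ebas (vs 0)
            \<and> (\<forall>k. y k \<in> cg_minimizers l (x k))
            \<and> (\<forall>k. x (Suc k) = x k + \<alpha> k *\<^sub>R (y k - x k))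
            \<and> ((\<forall>k. \<alpha> k = 1) \<or> (\<forall>k. \<alpha> k \<in> line_search l (x k) (y k - x k)))
          \<longrightarrow> (\<forall>k\<le>K. x k = ebas (vs k))
            \<and> (\<forall>k>K. x k = ebas (vs K))
            \<and> (\<forall>k\<le>K. l (x k) = \<omega>1 (vs k))
            \<and> (\<forall>k<K. \<omega>1 (vs k) > \<omega>1 (vs (Suc k))))"
  proof (intro impI allI)
    assume HE: "\<forall>v w. (v, w) \<in> E \<longrightarrow> \<omega>1 v > \<omega>2 v w \<and> \<omega>2 v w > \<omega>1 w"
    fix x y :: "nat \<Rightarrow> real^'v" and \<alpha> :: "nat \<Rightarrow> real"
    assume H: "x 0 = ebas (vs 0)
            \<and> (\<forall>k. y k \<in> cg_minimizers l (x k))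
            \<and> (\<forall>k. x (Suc k) = x k + \<alpha> k *\<^sub>R (y k - x k))
            \<and> ((\<forall>k. \<alpha> k = 1) \<or> (\<forall>k. \<alpha> k \<in> line_search l (x k) (y k - x k)))"
    have endm: "cg_minimizers l (ebas (vs K)) = {ebas (vs K)}"
    proof (rule L3[OF DD])
      fix w assume w: "w \<noteq> vs K"
      have nE: "(vs K, w) \<notin> E" by (rule path_end)
      have "\<omega>2 (vs K) w > \<omega>1 (vs K)"
      proof (cases "(w, vs K) \<in> E")
        case True then show ?thesis using HE w_iv[of "vs K" w] w by auto
      next
        case False then show ?thesis using w_iii[OF w[symmetric] nE False] w_v1 by simp
      qed
      then show "cc (vs K) (vs K) < cc (vs K) w" using w by (simp add: cc_def)
    qed
    have X: "x k = ebas (vs (min k K))" for k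
    proof (induction k)
      case 0 then show ?case using H by simp
    next
      case (Suc k)
      show ?case
      proof (cases "k < K")
        case True
        let ?v = "vs k" and ?w0 = "vs (Suc k)"
        have e: "(?v, ?w0) \<in> E" using path[OF True] .
        have vw: "?v \<noteq> ?w0" using noloop[of ?v] e by auto
        have xk: "x k = ebas ?v" using Suc True by simp
        have "y k \<in> cg_minimizers l (x k)" using H by blast
        then have yk: "y k = ebas ?w0" using succ[OF True] xk by simp
        have "\<alpha> k = 1"
        proof (cases "\<forall>k. \<alpha> k = 1")
          case True then show ?thesis by simp
        next
          case False
          then have "\<forall>k. \<alpha> k \<in> line_search l (x k) (y k - x k)" using H by blast
          then have ls: "\<alpha> k \<in> line_search l (ebas ?v) (ebas ?w0 - ebas ?v)" using xk yk by (metis (no_types))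
          have m2: "l ((1/2) *\<^sub>R (ebas ?w0 + ebas ?v)) = \<omega>2 ?v ?w0"
            using l_mid[OF vw[symmetric]] w_iv[OF vw] by simp
          have i1: "\<omega>1 ?v > \<omega>2 ?v ?w0" and i2: "\<omega>2 ?v ?w0 > \<omega>1 ?w0" using HE e by auto
          show ?thesis
            by (rule L4[OF vw l_vert l_vert l_mid[OF vw] m2 l_aff l_aff i1 i2 ls])
        qed
        then have "x (Suc k) = ebas ?w0" using H yk by simp
        then show ?thesis using True by simp
      next
        case False
        then have xk: "x k = ebas (vs K)" using Suc by simp
        have "y k \<in> cg_minimizers l (x k)" using H by blast
        then have "y k = x k" using endm xk by simp
        then have "x (Suc k) = x k" using H by simp
        then show ?thesis using xk False by simp
      qed
    qed
    show "(\<forall>k\<le>K. x k = ebas (vs k))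
            \<and> (\<forall>k>K. x k = ebas (vs K))
            \<and> (\<forall>k\<le>K. l (x k) = \<omega>1 (vs k))
            \<and> (\<forall>k<K. \<omega>1 (vs k) > \<omega>1 (vs (Suc k)))"
    proof (intro conjI allI impI)
      fix k assume "k \<le> K" then show "x k = ebas (vs k)" using X[of k] by simp
    next
      fix k assume "K < k" then show "x k = ebas (vs K)" using X[of k] by simp
    next
      fix k assume "k \<le> K" then show "l (x k) = \<omega>1 (vs k)" using X[of k] l_vert by simp
    next
      fix k assume k: "k < K"
      show "\<omega>1 (vs k) > \<omega>1 (vs (Suc k))" using HE path[OF k] by fastforce
    qed
  qed
  show ?thesis by (rule conjI[OF part_a part_b])
qed

end
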